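(* In the $\mathbf N$-agent system described in the context, let $\{\boldsymbol\mu_t^{\mathbf N}\}_{t\ge0}$ be the empirical joint state distributions induced by a policy $\boldsymbol\pi=\{\boldsymbol\pi_t\}_{t\ge0}$. Then for every $t\ge0$, $$\mathbb E\big|\boldsymbol\mu_{t+1}^{\mathbf N}-P^{\mathrm{MF}}(\boldsymbol\mu_t^{\mathbf N},\boldsymbol\pi_t)\big|_1\le C_P\sqrt{|\mathcal X||\mathcal U|}\frac1{N_{\mathrm{pop}}}\Big(\sum_{k\in[K]}\sqrt{N_k}\Big),$$ where $C_P=2+L_P$.
   Context: Fix $K\ge1$, $N_1,\dots,N_K\ge1$, $[K]=\{1,\dots,K\}$, $N_{\mathrm{pop}}=\sum_kN_k$, finite sets $\mathcal X,\mathcal U$, $\mathcal P(A)$ the probability distributions on $A$, $|\cdot|_1$ the $L_1$ norm, $L_P>0$. Agent $j\in[N_k]$ of class $k$ has state $x_{j,k}^t$ and action $u_{j,k}^t$; $\boldsymbol\mu_t^{\mathbf N}(x,k)=\frac1{N_{\mathrm{pop}}}\sum_{j=1}^{N_k}\mathbf 1(x_{j,k}^t=x)$, $\boldsymbol\nu_t^{\mathbf N}(u,k)=\frac1{N_{\mathrm{pop}}}\sum_{j=1}^{N_k}\mathbf 1(u_{j,k}^t=u)$. For each $k$, $P_k:\mathcal X\times\mathcal U\times\mathcal P(\mathcal X\times[K])\times\mathcal P(\mathcal U\times[K])\to\mathcal P(\mathcal X)$ satisfies $|P_k(x,u,\boldsymbol\mu_1,\boldsymbol\nu_1)-P_k(x,u,\boldsymbol\mu_2,\boldsymbol\nu_2)|_1\le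 L_P(|\boldsymbol\mu_1-\boldsymbol\mu_2|_1+|\boldsymbol\nu_1-\boldsymbol\nu_2|_1)$. A policy is $\boldsymbol\pi=\{\boldsymbol\pi_t\}_{t\ge0}$, $\boldsymbol\pi_t=(\pi_k^t)_k$, $\pi_k^t:\mathcal X\times\mathcal P(\mathcal X\times[K])\to\mathcal P(\mathcal U)$. Dynamics: conditioned on all states at time $t$, actions are independent across agents with $u_{j,k}^t\sim\pi_k^t(x_{j,k}^t,\boldsymbol\mu_t^{\mathbf N})$; conditioned on states and actions, next states are independent with $x_{j,k}^{t+1}\sim P_k(x_{j,k}^t,u_{j,k}^t,\boldsymbol\mu_t^{\mathbf N},\boldsymbol\nu_t^{\mathbf N})$. Mean-field: $\nu^{\mathrm{MF}}(\boldsymbol\mu,\boldsymbol\pi)(u,k)=\sum_x\pi_k(x,\boldsymbol\mu)(u)\boldsymbol\mu(x,k)$, $P^{\mathrm{MF}}(\boldsymbol\mu,\boldsymbol\pi)(x',k)=\sum_{x,u}\boldsymbol\mu(x,k)\pi_k(x,\boldsymbol\mu)(u)P_k(x,u,\boldsymbol\mu,\nu^{\mathrm{MF}}(\boldsymbol\mu,\boldsymbol\pi))(x')$. *)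

theory Defs
  imports "HOL-Probability.Probability"
begin

text \<open>Classes are indexed by k < K (i.e. [K] is rendered as {..<K}); agent j of class k
  is the pair (k, j) with j < N k. A joint configuration of states (actions) is a
  function from agents to states (actions); outside the agent set it is "undefined".\<close>

definition agents :: "nat \<Rightarrow> (nat \<Rightarrow> nat) \<Rightarrow> (nat \<times> nat) set" where
  "agents K N = {(k, j). k < K \<and> j < N k}"

definition Npop :: "nat \<Rightarrow> (nat \<Rightarrow> nat) \<Rightarrow> nat" where
  "Npop K N = (\<Sum>k<K. N k)"

definition empirical :: "nat \<Rightarrow> (nat \<Rightarrow> nat) \<Rightarrow> (nat \<times> nat \<Rightarrow> 'a) \<Rightarrow> ('a \<times> nat \<Rightarrow> real)" where
  "empirical K N s = (\<lambda>(x, k). if k < K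
      then real (card {j. j < N k \<and> s (k, j) = x}) / real (Npop K N) else 0)"

definition is_dist :: "nat \<Rightarrow> ('a::finite \<times> nat \<Rightarrow> real) \<Rightarrow> bool" where
  "is_dist K m \<longleftrightarrow> (\<forall>p. 0 \<le> m p) \<and> (\<forall>x k. K \<le> k \<longrightarrow> m (x, k) = 0)
      \<and> (\<Sum>p\<in>(UNIV::'a set) \<times> {..<K}. m p) = 1"

definition l1 :: "nat \<Rightarrow> ('a::finite \<times> nat \<Rightarrow> real) \<Rightarrow> ('a \<times> nat \<Rightarrow> real) \<Rightarrow> real" where
  "l1 K m1 m2 = (\<Sum>p\<in>(UNIV::'a set) \<times> {..<K}. \<bar>m1 p - m2 p\<bar>)"

definition l1_pmf :: "'a::finite pmf \<Rightarrow> 'a pmf \<Rightarrow> real" where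
  "l1_pmf p q = (\<Sum>x\<in>UNIV. \<bar>pmf p x - pmf q x\<bar>)"

text \<open>Mean-field maps. pol k x mu is the class-k policy; P k x u mu nu the class-k kernel.\<close>
definition nu_MF :: "nat \<Rightarrow> ('x \<times> nat \<Rightarrow> real) \<Rightarrow> (nat \<Rightarrow> 'x \<Rightarrow> ('x \<times> nat \<Rightarrow> real) \<Rightarrow> 'u pmf)
    \<Rightarrow> ('u \<times> nat \<Rightarrow> real)" where
  "nu_MF K mu pol = (\<lambda>(u, k). if k < K then (\<Sum>x\<in>UNIV. pmf (pol k x mu) u * mu (x, k)) else 0)"

definition P_MF :: "nat \<Rightarrow> (nat \<Rightarrow> 'x \<Rightarrow> 'u \<Rightarrow> ('x \<times> nat \<Rightarrow> real) \<Rightarrow> ('u \<times> nat \<Rightarrow> real) \<Rightarrow> 'x pmf)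
    \<Rightarrow> ('x \<times> nat \<Rightarrow> real) \<Rightarrow> (nat \<Rightarrow> 'x \<Rightarrow> ('x \<times> nat \<Rightarrow> real) \<Rightarrow> 'u pmf) \<Rightarrow> ('x \<times> nat \<Rightarrow> real)" where
  "P_MF K P mu pol = (\<lambda>(x', k). if k < K then
      (\<Sum>x\<in>UNIV. \<Sum>u\<in>UNIV. mu (x, k) * pmf (pol k x mu) u * pmf (P k x u mu (nu_MF K mu pol)) x')
      else 0)"

definition step :: "nat \<Rightarrow> (nat \<Rightarrow> nat) \<Rightarrow> (nat \<Rightarrow> 'x \<Rightarrow> 'u \<Rightarrow> ('x \<times> nat \<Rightarrow> real) \<Rightarrow> ('u \<times> nat \<Rightarrow> real) \<Rightarrow> 'x pmf)
    \<Rightarrow> (nat \<Rightarrow> nat \<Rightarrow> 'x \<Rightarrow> ('x \<times> nat \<Rightarrow> real) \<Rightarrow> 'u pmf) \<Rightarrow> nat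
    \<Rightarrow> (nat \<times> nat \<Rightarrow> 'x) \<Rightarrow> (nat \<times> nat \<Rightarrow> 'x) pmf" where
  "step K N P pol t s =
     Pi_pmf (agents K N) undefined (\<lambda>a. pol t (fst a) (s a) (empirical K N s)) \<bind>
       (\<lambda>act. Pi_pmf (agents K N) undefined
          (\<lambda>a. P (fst a) (s a) (act a) (empirical K N s) (empirical K N act)))"

primrec config_law :: "nat \<Rightarrow> (nat \<Rightarrow> nat) \<Rightarrow> (nat \<Rightarrow> 'x \<Rightarrow> 'u \<Rightarrow> ('x \<times> nat \<Rightarrow> real) \<Rightarrow> ('u \<times> nat \<Rightarrow> real) \<Rightarrow> 'x pmf)
    \<Rightarrow> (nat \<Rightarrow> nat \<Rightarrow> 'x \<Rightarrow> ('x \<times> nat \<Rightarrow> real) \<Rightarrow> 'u pmf) \<Rightarrow> (nat \<times> nat \<Rightarrow> 'x) pmf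
    \<Rightarrow> nat \<Rightarrow> (nat \<times> nat \<Rightarrow> 'x) pmf" where
  "config_law K N P pol init 0 = init"
| "config_law K N P pol init (Suc t) = config_law K N P pol init t \<bind> step K N P pol t"

definition pair_law where
  "pair_law K N P pol init t =
     config_law K N P pol init t \<bind> (\<lambda>s. map_pmf (\<lambda>s'. (s, s')) (step K N P pol t s))"

end

theory Submission
  imports Defs
begin


lemma fin_Pi: "finite A \<Longrightarrow> finite (set_pmf (Pi_pmf A d (p :: 'i \<Rightarrow> 'b::finite pmf)))"
  by (simp add: set_Pi_pmf finite_PiE_dflt)

lemma exp_bind_fin:
  fixes f :: "'b \<Rightarrow> real"
  assumes "finite (set_pmf M)" "\<And>x. x \<in> set_pmf M \<Longrightarrow> finite (set_pmf (N x))"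
  shows "measure_pmf.expectation (M \<bind> N) f = measure_pmf.expectation M (\<lambda>x. measure_pmf.expectation (N x) f)"
proof -
  have "measure_pmf.expectation (M \<bind> N) f = (\<Sum>a\<in>set_pmf M. pmf M a *\<^sub>R measure_pmf.expectation (N a) f)"
    using assms by (intro pmf_expectation_bind) auto
  also have "\<dots> = measure_pmf.expectation M (\<lambda>x. measure_pmf.expectation (N x) f)"
    using assms by (subst integral_measure_pmf_real[of "set_pmf M"]) (auto simp: mult.commute)
  finally show ?thesis .
qed

lemma exp_bind_le_nn:
  fixes f :: "'b \<Rightarrow> real"
  assumes "\<And>y. 0 \<le> f y" "0 \<le> C" "\<And>x. x \<in> set_pmf M \<Longrightarrow> integrable (measure_pmf (N x)) f"
    "\<And>x. x \<in> set_pmf M \<Longrightarrow> measure_pmf.expectation (N x) f \<le> C"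
  shows "measure_pmf.expectation (M \<bind> N) f \<le> C"
proof (rule integral_real_bounded[OF assms(2)])
  have "(\<integral>\<^sup>+y. ennreal (f y) \<partial>measure_pmf (bind_pmf M N)) = (\<integral>\<^sup>+x. (\<integral>\<^sup>+y. ennreal (f y) \<partial>N x) \<partial>M)"
    by simp
  also have "\<dots> \<le> (\<integral>\<^sup>+x. ennreal C \<partial>M)"
  proof (rule nn_integral_mono_AE)
    show "AE x in measure_pmf M. (\<integral>\<^sup>+y. ennreal (f y) \<partial>N x) \<le> ennreal C"
    proof (subst AE_measure_pmf_iff, intro ballI)
      fix x assume x: "x \<in> set_pmf M"
      have "(\<integral>\<^sup>+y. ennreal (f y) \<partial>N x) = ennreal (measure_pmf.expectation (N x) f)"
        using assms(1) assms(3)[OF x] by (intro nn_integral_eq_integral) auto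
      also have "\<dots> \<le> ennreal C" using assms(4)[OF x] by (rule ennreal_leI)
      finally show "(\<integral>\<^sup>+y. ennreal (f y) \<partial>N x) \<le> ennreal C" .
    qed
  qed
  also have "\<dots> = ennreal C" by (simp add: measure_pmf.emeasure_space_1)
  finally show "(\<integral>\<^sup>+y. ennreal (f y) \<partial>measure_pmf (bind_pmf M N)) \<le> ennreal C" .
qed

lemma Pi_sq_sum:
  fixes h :: "'i \<Rightarrow> 'b::finite \<Rightarrow> real"
  assumes "finite A" "\<And>i. i \<in> A \<Longrightarrow> measure_pmf.expectation (p i) (h i) = 0"
  shows "measure_pmf.expectation (Pi_pmf A d p) (\<lambda>f. (\<Sum>i\<in>A. h i (f i))\<^sup>2)
       = (\<Sum>i\<in>A. measure_pmf.expectation (p i) (\<lambda>y. (h i y)\<^sup>2))"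
  using assms
proof (induction A rule: finite_induct)
  case empty
  then show ?case by simp
next
  case (insert a A)
  define S where "S = (\<lambda>f. \<Sum>i\<in>A. h i (f i))"
  have finA: "finite (set_pmf (Pi_pmf A d p))" using insert.hyps(1) by (rule fin_Pi)
  have ES: "measure_pmf.expectation (Pi_pmf A d p) S = 0"
  proof -
    have "measure_pmf.expectation (Pi_pmf A d p) S = (\<Sum>i\<in>A. measure_pmf.expectation (Pi_pmf A d p) (\<lambda>f. h i (f i)))"
      unfolding S_def by (rule Bochner_Integration.integral_sum) (simp add: integrable_measure_pmf_finite[OF finA])
    also have "\<dots> = (\<Sum>i\<in>A. measure_pmf.expectation (map_pmf (\<lambda>f. f i) (Pi_pmf A d p)) (h i))"
      by simp
    also have "\<dots> = (\<Sum>i\<in>A. measure_pmf.expectation (p i) (h i))"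
      using insert.hyps(1) by (intro sum.cong refl) (simp add: Pi_pmf_component)
    also have "\<dots> = 0" using insert.prems by simp
    finally show ?thesis .
  qed
  have eq: "Pi_pmf (insert a A) d p = p a \<bind> (\<lambda>y. map_pmf (\<lambda>f. f(a := y)) (Pi_pmf A d p))"
    using insert.hyps by (simp add: Pi_pmf_insert' map_pmf_def)
  have "measure_pmf.expectation (Pi_pmf (insert a A) d p) (\<lambda>f. (\<Sum>i\<in>insert a A. h i (f i))\<^sup>2)
     = measure_pmf.expectation (p a) (\<lambda>y. measure_pmf.expectation (Pi_pmf A d p)
          (\<lambda>f. (\<Sum>i\<in>insert a A. h i ((f(a:=y)) i))\<^sup>2))"
    unfolding eq by (subst exp_bind_fin) (auto intro: finA)
  also have "\<dots> = measure_pmf.expectation (p a) (\<lambda>y. measure_pmf.expectation (Pi_pmf A d p)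
          (\<lambda>f. (h a y)\<^sup>2 + 2 * h a y * S f + (S f)\<^sup>2))"
  proof -
    have "(\<Sum>i\<in>insert a A. h i ((f(a:=y)) i)) = h a y + S f" for f y
    proof -
      have "(\<Sum>i\<in>A. h i ((f(a:=y)) i)) = S f" unfolding S_def
        using insert.hyps(2) by (intro sum.cong refl) auto
      then show ?thesis using insert.hyps by simp
    qed
    then show ?thesis by (simp add: power2_sum algebra_simps)
  qed
  also have "\<dots> = measure_pmf.expectation (p a) (\<lambda>y. (h a y)\<^sup>2 + measure_pmf.expectation (Pi_pmf A d p) (\<lambda>f. (S f)\<^sup>2))"
  proof -
    have "measure_pmf.expectation (Pi_pmf A d p) (\<lambda>f. (h a y)\<^sup>2 + 2 * h a y * S f + (S f)\<^sup>2)
        = (h a y)\<^sup>2 + 2 * h a y * measure_pmf.expectation (Pi_pmf A d p) S + measure_pmf.expectation (Pi_pmf A d p) (\<lambda>f. (S f)\<^sup>2)" for y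
      by (simp add: integrable_measure_pmf_finite[OF finA])
    then show ?thesis by (simp add: ES)
  qed
  also have "\<dots> = measure_pmf.expectation (p a) (\<lambda>y. (h a y)\<^sup>2) + measure_pmf.expectation (Pi_pmf A d p) (\<lambda>f. (S f)\<^sup>2)"
    by (simp add: integrable_measure_pmf_finite)
  also have "measure_pmf.expectation (Pi_pmf A d p) (\<lambda>f. (S f)\<^sup>2) = (\<Sum>i\<in>A. measure_pmf.expectation (p i) (\<lambda>y. (h i y)\<^sup>2))"
    unfolding S_def using insert by simp
  finally show ?case using insert.hyps by simp
qed

lemma abs_le_sqrt:
  fixes X :: "'a \<Rightarrow> real"
  assumes "finite (set_pmf M)"
  shows "measure_pmf.expectation M (\<lambda>x. \<bar>X x\<bar>) \<le> sqrt (measure_pmf.expectation M (\<lambda>x. (X x)\<^sup>2))"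
proof -
  have "0 \<le> measure_pmf.variance M (\<lambda>x. \<bar>X x\<bar>)" by (rule measure_pmf.variance_positive)
  also have "measure_pmf.variance M (\<lambda>x. \<bar>X x\<bar>) = measure_pmf.expectation M (\<lambda>x. (X x)\<^sup>2) - (measure_pmf.expectation M (\<lambda>x. \<bar>X x\<bar>))\<^sup>2"
    by (subst measure_pmf.variance_eq) (auto simp: integrable_measure_pmf_finite[OF assms])
  finally show ?thesis by (intro real_le_rsqrt) simp
qed

lemma sum_sqrt_le:
  fixes v :: "'c \<Rightarrow> real"
  assumes "finite C" "\<And>c. c \<in> C \<Longrightarrow> 0 \<le> v c"
  shows "(\<Sum>c\<in>C. sqrt (v c)) \<le> sqrt (real (card C) * (\<Sum>c\<in>C. v c))"
proof (rule real_le_rsqrt)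
  have "(\<Sum>c\<in>C. 1 * sqrt (v c))\<^sup>2 \<le> (\<Sum>c\<in>C. 1\<^sup>2) * (\<Sum>c\<in>C. (sqrt (v c))\<^sup>2)"
    by (rule Cauchy_Schwarz_ineq_sum)
  also have "(\<Sum>c\<in>C. (sqrt (v c))\<^sup>2) = (\<Sum>c\<in>C. v c)" using assms by (intro sum.cong) auto
  finally show "(\<Sum>c\<in>C. sqrt (v c))\<^sup>2 \<le> real (card C) * (\<Sum>c\<in>C. v c)" by simp
qed


lemma exp_le_1:
  fixes f :: "'b \<Rightarrow> real"
  assumes "finite (set_pmf M)" "\<And>y. f y \<le> 1"
  shows "measure_pmf.expectation M f \<le> 1"
proof -
  have "measure_pmf.expectation M f \<le> measure_pmf.expectation M (\<lambda>_. 1)"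
    using assms by (intro integral_mono) (auto simp: integrable_measure_pmf_finite)
  then show ?thesis by simp
qed

lemma classsum_bound:
  fixes g :: "nat \<times> nat \<Rightarrow> 'b::finite \<Rightarrow> 'c::finite \<Rightarrow> real"
  assumes I: "finite I" and kI: "\<And>j. j < m \<Longrightarrow> (k, j) \<in> I"
    and g1: "\<And>j y. j < m \<Longrightarrow> (\<Sum>c\<in>UNIV. (g (k, j) y c)\<^sup>2) \<le> 1"
  shows "measure_pmf.expectation (Pi_pmf I d p)
     (\<lambda>\<omega>. \<Sum>c\<in>UNIV. \<bar>\<Sum>j<m. g (k, j) (\<omega> (k, j)) c - measure_pmf.expectation (p (k, j)) (\<lambda>y. g (k, j) y c)\<bar>)
     \<le> sqrt (real (CARD('c) * m))"
proof -
  let ?M = "Pi_pmf I d p"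
  define B where "B = Pair k ` {..<m}"
  have BI: "B \<subseteq> I" using kI by (auto simp: B_def)
  have cardB: "card B = m" unfolding B_def by (subst card_image) (auto simp: inj_on_def)
  define e where "e i c = measure_pmf.expectation (p i) (\<lambda>y. g i y c)" for i c
  define h where "h i y c = (if i \<in> B then g i y c - e i c else 0)" for i y c
  have fin: "finite (set_pmf ?M)" using I by (rule fin_Pi)
  have S: "(\<Sum>j<m. g (k, j) (\<omega> (k, j)) c - e (k, j) c) = (\<Sum>i\<in>I. h i (\<omega> i) c)" for \<omega> c
  proof -
    have "(\<Sum>i\<in>I. h i (\<omega> i) c) = (\<Sum>i\<in>{i\<in>I. i \<in> B}. g i (\<omega> i) c - e i c)"
      unfolding h_def using I by (simp add: sum.inter_filter)
    also have "{i\<in>I. i \<in> B} = B" using BI by auto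
    also have "(\<Sum>i\<in>B. g i (\<omega> i) c - e i c) = (\<Sum>j<m. g (k, j) (\<omega> (k, j)) c - e (k, j) c)"
      unfolding B_def by (subst sum.reindex) (auto simp: inj_on_def)
    finally show ?thesis by simp
  qed
  have Eh0: "measure_pmf.expectation (p i) (\<lambda>y. h i y c) = 0" for i c
    unfolding h_def e_def by (cases "i \<in> B") (auto simp: integrable_measure_pmf_finite)
  have Eh2: "(\<Sum>c\<in>UNIV. measure_pmf.expectation (p i) (\<lambda>y. (h i y c)\<^sup>2)) \<le> (if i \<in> B then 1 else 0)" for i
  proof (cases "i \<in> B")
    case True
    then obtain j where j: "j < m" "i = (k, j)" by (auto simp: B_def)
    have "measure_pmf.expectation (p i) (\<lambda>y. (h i y c)\<^sup>2) \<le> measure_pmf.expectation (p i) (\<lambda>y. (g i y c)\<^sup>2)" for c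
    proof -
      have "measure_pmf.expectation (p i) (\<lambda>y. (h i y c)\<^sup>2) = measure_pmf.variance (p i) (\<lambda>y. g i y c)"
        using True unfolding h_def e_def by simp
      also have "\<dots> = measure_pmf.expectation (p i) (\<lambda>y. (g i y c)\<^sup>2) - (e i c)\<^sup>2"
        unfolding e_def by (subst measure_pmf.variance_eq) (auto simp: integrable_measure_pmf_finite)
      finally show ?thesis by simp
    qed
    then have "(\<Sum>c\<in>UNIV. measure_pmf.expectation (p i) (\<lambda>y. (h i y c)\<^sup>2))
        \<le> (\<Sum>c\<in>UNIV. measure_pmf.expectation (p i) (\<lambda>y. (g i y c)\<^sup>2))" by (intro sum_mono)
    also have "\<dots> = measure_pmf.expectation (p i) (\<lambda>y. \<Sum>c\<in>UNIV. (g i y c)\<^sup>2)"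
      by (subst Bochner_Integration.integral_sum) (auto simp: integrable_measure_pmf_finite)
    also have "\<dots> \<le> 1" using g1 j by (intro exp_le_1) auto
    finally show ?thesis using True by simp
  next
    case False
    then show ?thesis unfolding h_def by simp
  qed
  have "measure_pmf.expectation ?M
     (\<lambda>\<omega>. \<Sum>c\<in>UNIV. \<bar>\<Sum>j<m. g (k, j) (\<omega> (k, j)) c - measure_pmf.expectation (p (k, j)) (\<lambda>y. g (k, j) y c)\<bar>)
    = measure_pmf.expectation ?M (\<lambda>\<omega>. \<Sum>c\<in>UNIV. \<bar>\<Sum>i\<in>I. h i (\<omega> i) c\<bar>)"
    using S unfolding e_def by simp
  also have "\<dots> = (\<Sum>c\<in>UNIV. measure_pmf.expectation ?M (\<lambda>\<omega>. \<bar>\<Sum>i\<in>I. h i (\<omega> i) c\<bar>))"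
    by (rule Bochner_Integration.integral_sum) (simp add: integrable_measure_pmf_finite[OF fin])
  also have "\<dots> \<le> (\<Sum>c\<in>UNIV. sqrt (measure_pmf.expectation ?M (\<lambda>\<omega>. (\<Sum>i\<in>I. h i (\<omega> i) c)\<^sup>2)))"
    by (intro sum_mono abs_le_sqrt fin)
  also have "\<dots> = (\<Sum>c\<in>UNIV. sqrt (\<Sum>i\<in>I. measure_pmf.expectation (p i) (\<lambda>y. (h i y c)\<^sup>2)))"
    by (intro sum.cong refl arg_cong[where f=sqrt] Pi_sq_sum[where h="\<lambda>i y. h i y c" for c, OF I] Eh0)
  also have "\<dots> \<le> sqrt (real (card (UNIV :: 'c set)) * (\<Sum>c\<in>UNIV. \<Sum>i\<in>I. measure_pmf.expectation (p i) (\<lambda>y. (h i y c)\<^sup>2)))"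
    by (intro sum_sqrt_le) (auto intro!: sum_nonneg)
  also have "\<dots> \<le> sqrt (real (CARD('c) * m))"
  proof -
    have "(\<Sum>c\<in>UNIV. \<Sum>i\<in>I. measure_pmf.expectation (p i) (\<lambda>y. (h i y c)\<^sup>2))
        = (\<Sum>i\<in>I. \<Sum>c\<in>UNIV. measure_pmf.expectation (p i) (\<lambda>y. (h i y c)\<^sup>2))" by (rule sum.swap)
    also have "\<dots> \<le> (\<Sum>i\<in>I. if i \<in> B then 1 else 0)" by (intro sum_mono Eh2)
    also have "\<dots> = real m" using I BI cardB by (simp add: sum.If_cases Int_absorb1)
    finally have "(\<Sum>c\<in>UNIV. \<Sum>i\<in>I. measure_pmf.expectation (p i) (\<lambda>y. (h i y c)\<^sup>2)) \<le> real m" .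
    then show ?thesis by (intro real_sqrt_le_mono) (auto intro: mult_left_mono)
  qed
  finally show ?thesis .
qed



definition Qform :: "nat \<Rightarrow> (nat \<Rightarrow> nat) \<Rightarrow> (nat \<times> nat \<Rightarrow> 'c \<Rightarrow> real) \<Rightarrow> ('c \<times> nat \<Rightarrow> real)" where
  "Qform K N w = (\<lambda>(c, k). if k < K then (\<Sum>j<N k. w (k, j) c) / real (Npop K N) else 0)"

lemma l1_Qform:
  "l1 K (Qform K N w1) (Qform K N (w2 :: _ \<Rightarrow> 'c::finite \<Rightarrow> real))
   = (\<Sum>k<K. \<Sum>c\<in>UNIV. \<bar>\<Sum>j<N k. w1 (k, j) c - w2 (k, j) c\<bar>) / real (Npop K N)"
proof -
  have "l1 K (Qform K N w1) (Qform K N w2) = (\<Sum>c\<in>UNIV. \<Sum>k<K. \<bar>Qform K N w1 (c, k) - Qform K N w2 (c, k)\<bar>)"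
    unfolding l1_def by (simp add: sum.cartesian_product)
  also have "\<dots> = (\<Sum>c\<in>UNIV. \<Sum>k<K. \<bar>\<Sum>j<N k. w1 (k, j) c - w2 (k, j) c\<bar> / real (Npop K N))"
    by (intro sum.cong refl) (simp add: Qform_def diff_divide_distrib[symmetric] sum_subtractf)
  also have "\<dots> = (\<Sum>k<K. \<Sum>c\<in>UNIV. \<bar>\<Sum>j<N k. w1 (k, j) c - w2 (k, j) c\<bar>) / real (Npop K N)"
    by (subst sum.swap) (simp add: sum_divide_distrib)
  finally show ?thesis .
qed

lemma Qform_cong:
  "(\<And>k j c. k < K \<Longrightarrow> j < N k \<Longrightarrow> w1 (k, j) c = w2 (k, j) c) \<Longrightarrow> Qform K N w1 = Qform K N w2"
  unfolding Qform_def by (intro ext) (auto intro!: sum.cong)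

lemma emp_Qform: "empirical K N s = Qform K N (\<lambda>a c. if s a = c then 1 else 0)"
proof (intro ext, clarify)
  fix c k
  have "real (card {j. j < N k \<and> s (k, j) = c}) = (\<Sum>j<N k. if s (k, j) = c then 1 else 0)"
    by (simp add: sum.If_cases Int_def conj_commute)
  then show "empirical K N s (c, k) = Qform K N (\<lambda>a c. if s a = c then 1 else 0) (c, k)"
    unfolding empirical_def Qform_def by simp
qed

lemma sum_emp:
  fixes f :: "'x::finite \<Rightarrow> real"
  assumes "k < K"
  shows "(\<Sum>x\<in>UNIV. empirical K N s (x, k) * f x) = (\<Sum>j<N k. f (s (k, j))) / real (Npop K N)"
proof -
  have "(\<Sum>x\<in>UNIV. empirical K N s (x, k) * f x) = (\<Sum>x\<in>UNIV. (\<Sum>j<N k. (if s (k, j) = x then f x else 0)) / real (Npop K N))"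
  proof (intro sum.cong refl)
    fix x
    have "(\<Sum>j<N k. if s (k, j) = x then 1 else 0) * f x = (\<Sum>j<N k. if s (k, j) = x then f x else 0)"
      unfolding sum_distrib_right by (intro sum.cong refl) simp
    then show "empirical K N s (x, k) * f x = (\<Sum>j<N k. if s (k, j) = x then f x else 0) / real (Npop K N)"
      using assms unfolding emp_Qform Qform_def by simp
  qed
  also have "\<dots> = (\<Sum>x\<in>UNIV. \<Sum>j<N k. (if s (k, j) = x then f x else 0)) / real (Npop K N)"
    by (simp add: sum_divide_distrib)
  also have "\<dots> = (\<Sum>j<N k. f (s (k, j))) / real (Npop K N)"
    by (subst sum.swap) simp
  finally show ?thesis .
qed

lemma nuMF_Qform:
  fixes pol :: "nat \<Rightarrow> 'x::finite \<Rightarrow> ('x \<times> nat \<Rightarrow> real) \<Rightarrow> 'u pmf"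
  shows "nu_MF K (empirical K N s) pol = Qform K N (\<lambda>a u. pmf (pol (fst a) (s a) (empirical K N s)) u)"
proof (intro ext, clarify)
  fix u k
  show "nu_MF K (empirical K N s) pol (u, k) = Qform K N (\<lambda>a u. pmf (pol (fst a) (s a) (empirical K N s)) u) (u, k)"
  proof (cases "k < K")
    case True
    then show ?thesis unfolding nu_MF_def Qform_def
      using sum_emp[OF True, of N s "\<lambda>x. pmf (pol k x (empirical K N s)) u"] by (simp add: mult.commute)
  qed (simp add: nu_MF_def Qform_def)
qed

lemma PMF_Qform:
  fixes pol :: "nat \<Rightarrow> 'x::finite \<Rightarrow> ('x \<times> nat \<Rightarrow> real) \<Rightarrow> 'u::finite pmf"
  shows "P_MF K P (empirical K N s) pol = Qform K N (\<lambda>a x'. \<Sum>u\<in>UNIV. pmf (pol (fst a) (s a) (empirical K N s)) u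
     * pmf (P (fst a) (s a) u (empirical K N s) (nu_MF K (empirical K N s) pol)) x')"
proof (intro ext, clarify)
  fix x' k
  show "P_MF K P (empirical K N s) pol (x', k) = Qform K N (\<lambda>a x'. \<Sum>u\<in>UNIV. pmf (pol (fst a) (s a) (empirical K N s)) u
     * pmf (P (fst a) (s a) u (empirical K N s) (nu_MF K (empirical K N s) pol)) x') (x', k)"
  proof (cases "k < K")
    case True
    then show ?thesis unfolding P_MF_def Qform_def
      using sum_emp[OF True, of N s "\<lambda>x. \<Sum>u\<in>UNIV. pmf (pol k x (empirical K N s)) u
         * pmf (P k x u (empirical K N s) (nu_MF K (empirical K N s) pol)) x'"]
      by (simp add: sum_distrib_left mult.assoc)
  qed (simp add: P_MF_def Qform_def)
qed

lemma is_dist_Qform: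
  fixes w :: "nat \<times> nat \<Rightarrow> 'c::finite \<Rightarrow> real"
  assumes "Npop K N > 0" "\<And>a c. 0 \<le> w a c" "\<And>k j. k < K \<Longrightarrow> j < N k \<Longrightarrow> (\<Sum>c\<in>UNIV. w (k, j) c) = 1"
  shows "is_dist K (Qform K N w)"
proof -
  have "(\<Sum>p\<in>(UNIV::'c set) \<times> {..<K}. Qform K N w p) = (\<Sum>c\<in>UNIV. \<Sum>k<K. Qform K N w (c, k))"
    by (subst sum.cartesian_product) (simp add: case_prod_eta)
  also have "\<dots> = (\<Sum>k<K. \<Sum>c\<in>UNIV. Qform K N w (c, k))" by (rule sum.swap)
  also have "\<dots> = (\<Sum>k<K. (\<Sum>c\<in>UNIV. \<Sum>j<N k. w (k, j) c) / real (Npop K N))"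
    by (intro sum.cong refl) (simp add: Qform_def sum_divide_distrib)
  also have "\<dots> = (\<Sum>k<K. real (N k) / real (Npop K N))"
  proof (intro sum.cong refl)
    fix k assume "k \<in> {..<K}"
    then have "(\<Sum>c\<in>UNIV. \<Sum>j<N k. w (k, j) c) = (\<Sum>j<N k. 1)"
      using assms(3) by (subst sum.swap) (intro sum.cong refl, simp)
    then show "(\<Sum>c\<in>UNIV. \<Sum>j<N k. w (k, j) c) / real (Npop K N) = real (N k) / real (Npop K N)" by simp
  qed
  also have "\<dots> = (\<Sum>k<K. real (N k)) / real (Npop K N)" by (rule sum_divide_distrib[symmetric])
  also have "(\<Sum>k<K. real (N k)) = real (Npop K N)" by (simp add: Npop_def)
  also have "real (Npop K N) / real (Npop K N) = 1" using assms(1) by simp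
  finally show ?thesis using assms unfolding is_dist_def
    by (auto simp: Qform_def intro!: divide_nonneg_nonneg sum_nonneg)
qed

lemma agents_finite: "finite (agents K N)"
proof -
  have "agents K N = Sigma {..<K} (\<lambda>k. {..<N k})" by (auto simp: agents_def)
  then show ?thesis by simp
qed



lemma exp_l1_bound:
  fixes g :: "nat \<times> nat \<Rightarrow> 'b::finite \<Rightarrow> 'c::finite \<Rightarrow> real"
  assumes g1: "\<And>k j y. k < K \<Longrightarrow> j < N k \<Longrightarrow> (\<Sum>c\<in>UNIV. (g (k, j) y c)\<^sup>2) \<le> 1"
  shows "measure_pmf.expectation (Pi_pmf (agents K N) d p)
     (\<lambda>\<omega>. l1 K (Qform K N (\<lambda>a c. g a (\<omega> a) c)) (Qform K N (\<lambda>a c. measure_pmf.expectation (p a) (\<lambda>y. g a y c))))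
     \<le> (\<Sum>k<K. sqrt (real (CARD('c) * N k))) / real (Npop K N)"
proof -
  let ?M = "Pi_pmf (agents K N) d p"
  have fin: "finite (set_pmf ?M)" by (rule fin_Pi[OF agents_finite])
  have "measure_pmf.expectation ?M
     (\<lambda>\<omega>. l1 K (Qform K N (\<lambda>a c. g a (\<omega> a) c)) (Qform K N (\<lambda>a c. measure_pmf.expectation (p a) (\<lambda>y. g a y c))))
    = measure_pmf.expectation ?M (\<lambda>\<omega>. (\<Sum>k<K. \<Sum>c\<in>UNIV. \<bar>\<Sum>j<N k. g (k, j) (\<omega> (k, j)) c - measure_pmf.expectation (p (k, j)) (\<lambda>y. g (k, j) y c)\<bar>) / real (Npop K N))"
    by (simp only: l1_Qform)
  also have "\<dots> = (\<Sum>k<K. measure_pmf.expectation ?M (\<lambda>\<omega>. \<Sum>c\<in>UNIV. \<bar>\<Sum>j<N k. g (k, j) (\<omega> (k, j)) c - measure_pmf.expectation (p (k, j)) (\<lambda>y. g (k, j) y c)\<bar>)) / real (Npop K N)"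
    by (subst integral_divide_zero, subst Bochner_Integration.integral_sum) (auto simp: integrable_measure_pmf_finite[OF fin])
  also have "\<dots> \<le> (\<Sum>k<K. sqrt (real (CARD('c) * N k))) / real (Npop K N)"
    by (intro divide_right_mono sum_mono classsum_bound agents_finite) (auto simp: agents_def g1)
  finally show ?thesis .
qed


lemma l1_tri3: "l1 K a (d :: 'c::finite \<times> nat \<Rightarrow> real) \<le> l1 K a b + l1 K b c + l1 K c d"
  unfolding l1_def sum.distrib[symmetric] by (intro sum_mono) linarith

lemma l1_nonneg: "0 \<le> l1 K a (b :: 'c::finite \<times> nat \<Rightarrow> real)"
  unfolding l1_def by (intro sum_nonneg) auto

lemma l1_self: "l1 K a (a :: 'c::finite \<times> nat \<Rightarrow> real) = 0"
  unfolding l1_def by simp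

lemma exp_indicator: "measure_pmf.expectation q (\<lambda>y. if y = c then 1 else 0 :: real) = pmf q c"
  by (subst integral_measure_pmf_real[of "{c}"]) (auto split: if_splits)

lemma sum_pmf_UNIV: "(\<Sum>x\<in>UNIV. pmf q (x::'a::finite)) = 1"
  by (rule sum_pmf_eq_1) auto

lemma sum_pmf_sq: "(\<Sum>x\<in>UNIV. (pmf q (x::'a::finite))\<^sup>2) \<le> 1"
proof -
  have "(\<Sum>x\<in>UNIV. (pmf q x)\<^sup>2) \<le> (\<Sum>x\<in>UNIV. pmf q x)"
  proof (intro sum_mono)
    fix x
    have "pmf q x * pmf q x \<le> 1 * pmf q x" by (intro mult_right_mono pmf_le_1) auto
    then show "(pmf q x)\<^sup>2 \<le> pmf q x" by (simp add: power2_eq_square)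
  qed
  then show ?thesis by (simp add: sum_pmf_UNIV)
qed

lemma sum_ind_sq: "(\<Sum>c\<in>UNIV. (if (y::'a::finite) = c then 1 else 0 :: real)\<^sup>2) \<le> 1"
proof -
  have "(\<Sum>c\<in>UNIV. (if y = c then 1 else 0 :: real)\<^sup>2) = (\<Sum>c\<in>UNIV. if y = c then 1 else 0)"
    by (intro sum.cong) auto
  then show ?thesis by simp
qed

lemma exp_pmf_finite: "measure_pmf.expectation q f = (\<Sum>u\<in>UNIV. pmf q (u::'a::finite) * f u)"
  by (subst integral_measure_pmf_real[of UNIV]) (auto simp: mult.commute)



lemma step_bound:
  fixes K :: nat and N :: "nat \<Rightarrow> nat" and L_P :: real
    and P :: "nat \<Rightarrow> 'x::finite \<Rightarrow> 'u::finite \<Rightarrow> ('x \<times> nat \<Rightarrow> real) \<Rightarrow> ('u \<times> nat \<Rightarrow> real) \<Rightarrow> 'x pmf"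
    and pol :: "nat \<Rightarrow> nat \<Rightarrow> 'x \<Rightarrow> ('x \<times> nat \<Rightarrow> real) \<Rightarrow> 'u pmf"
    and s :: "nat \<times> nat \<Rightarrow> 'x"
  assumes npos: "Npop K N > 0" and LP: "L_P > 0"
    and Lip: "\<And>k x u mu1 mu2 nu1 nu2. k < K \<Longrightarrow> is_dist K mu1 \<Longrightarrow> is_dist K mu2 \<Longrightarrow>
           is_dist K nu1 \<Longrightarrow> is_dist K nu2 \<Longrightarrow>
           l1_pmf (P k x u mu1 nu1) (P k x u mu2 nu2) \<le> L_P * (l1 K mu1 mu2 + l1 K nu1 nu2)"
  shows "measure_pmf.expectation (step K N P pol t s)
           (\<lambda>s'. l1 K (empirical K N s') (P_MF K P (empirical K N s) (pol t)))
         \<le> 2 * ((\<Sum>k<K. sqrt (real (CARD('x) * N k))) / real (Npop K N))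
            + L_P * ((\<Sum>k<K. sqrt (real (CARD('u) * N k))) / real (Npop K N))"
proof -
  define \<mu> where "\<mu> = empirical K N s"
  define Ag where "Ag = agents K N"
  define pa where "pa a = pol t (fst a) (s a) \<mu>" for a
  define Act where "Act = Pi_pmf Ag undefined pa"
  define \<nu>MF where "\<nu>MF = nu_MF K \<mu> (pol t)"
  define px where "px act a = P (fst a) (s a) (act a) \<mu> (empirical K N act)" for act a
  define Nx where "Nx act = Pi_pmf Ag undefined (px act)" for act
  define PMF where "PMF = P_MF K P \<mu> (pol t)"
  define Q where "Q act = Qform K N (\<lambda>a x'. pmf (px act a) x')" for act
  define R where "R act = Qform K N (\<lambda>a x'. pmf (P (fst a) (s a) (act a) \<mu> \<nu>MF) x')" for act :: "nat \<times> nat \<Rightarrow> 'u"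
  define T1 where "T1 = (\<Sum>k<K. sqrt (real (CARD('x) * N k))) / real (Npop K N)"
  define T2 where "T2 = (\<Sum>k<K. sqrt (real (CARD('u) * N k))) / real (Npop K N)"
  have stepeq: "step K N P pol t s = Act \<bind> Nx"
    unfolding step_def Act_def Nx_def px_def pa_def \<mu>_def Ag_def ..
  have finAct: "finite (set_pmf Act)" unfolding Act_def Ag_def by (rule fin_Pi[OF agents_finite])
  have finNx: "finite (set_pmf (Nx act))" for act unfolding Nx_def Ag_def by (rule fin_Pi[OF agents_finite])
  have dist_emp: "is_dist K (empirical K N r)" for r :: "nat \<times> nat \<Rightarrow> 'c::finite"
    unfolding emp_Qform by (rule is_dist_Qform[OF npos]) auto
  have dist_\<nu>MF: "is_dist K \<nu>MF"
    unfolding \<nu>MF_def \<mu>_def nuMF_Qform by (rule is_dist_Qform[OF npos]) (auto simp: sum_pmf_UNIV)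
  have PMF_eq: "PMF = Qform K N (\<lambda>a c. measure_pmf.expectation (pa a) (\<lambda>y. pmf (P (fst a) (s a) y \<mu> \<nu>MF) c))"
    unfolding PMF_def \<mu>_def PMF_Qform pa_def \<nu>MF_def by (simp add: exp_pmf_finite)
  have \<nu>MF_eq: "\<nu>MF = Qform K N (\<lambda>a c. measure_pmf.expectation (pa a) (\<lambda>y. if y = c then 1 else 0))"
    unfolding \<nu>MF_def \<mu>_def nuMF_Qform pa_def by (simp add: exp_indicator)
  have Q_eq: "Q act = Qform K N (\<lambda>a c. measure_pmf.expectation (px act a) (\<lambda>y. if y = c then 1 else 0))" for act
    unfolding Q_def by (simp add: exp_indicator)
  have QR: "l1 K (Q act) (R act) \<le> L_P * l1 K (empirical K N act) \<nu>MF" for act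
  proof -
    have "l1 K (Q act) (R act) = (\<Sum>k<K. \<Sum>c\<in>UNIV. \<bar>\<Sum>j<N k. pmf (px act (k, j)) c - pmf (P k (s (k, j)) (act (k, j)) \<mu> \<nu>MF) c\<bar>) / real (Npop K N)"
      unfolding Q_def R_def l1_Qform by simp
    also have "\<dots> \<le> (\<Sum>k<K. \<Sum>j<N k. L_P * l1 K (empirical K N act) \<nu>MF) / real (Npop K N)"
    proof (intro divide_right_mono sum_mono)
      fix k assume k: "k \<in> {..<K}"
      have "(\<Sum>c\<in>UNIV. \<bar>\<Sum>j<N k. pmf (px act (k, j)) c - pmf (P k (s (k, j)) (act (k, j)) \<mu> \<nu>MF) c\<bar>)
          \<le> (\<Sum>c\<in>UNIV. \<Sum>j<N k. \<bar>pmf (px act (k, j)) c - pmf (P k (s (k, j)) (act (k, j)) \<mu> \<nu>MF) c\<bar>)"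
        by (intro sum_mono sum_abs)
      also have "\<dots> = (\<Sum>j<N k. l1_pmf (px act (k, j)) (P k (s (k, j)) (act (k, j)) \<mu> \<nu>MF))"
        unfolding l1_pmf_def by (rule sum.swap)
      also have "\<dots> \<le> (\<Sum>j<N k. L_P * l1 K (empirical K N act) \<nu>MF)"
      proof (intro sum_mono)
        fix j
        have "l1_pmf (px act (k, j)) (P k (s (k, j)) (act (k, j)) \<mu> \<nu>MF) \<le> L_P * (l1 K \<mu> \<mu> + l1 K (empirical K N act) \<nu>MF)"
          unfolding px_def fst_conv using k by (intro Lip) (auto simp: \<mu>_def dist_emp dist_\<nu>MF)
        then show "l1_pmf (px act (k, j)) (P k (s (k, j)) (act (k, j)) \<mu> \<nu>MF) \<le> L_P * l1 K (empirical K N act) \<nu>MF"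
          by (simp add: l1_self)
      qed
      finally show "(\<Sum>c\<in>UNIV. \<bar>\<Sum>j<N k. pmf (px act (k, j)) c - pmf (P k (s (k, j)) (act (k, j)) \<mu> \<nu>MF) c\<bar>)
          \<le> (\<Sum>j<N k. L_P * l1 K (empirical K N act) \<nu>MF)" .
    qed simp
    also have "\<dots> = L_P * l1 K (empirical K N act) \<nu>MF * ((\<Sum>k<K. real (N k)) / real (Npop K N))"
      by (simp add: sum_distrib_right[symmetric] mult.commute)
    also have "(\<Sum>k<K. real (N k)) = real (Npop K N)" by (simp add: Npop_def)
    finally show ?thesis using npos by simp
  qed
  have inner: "measure_pmf.expectation (Nx act) (\<lambda>s'. l1 K (empirical K N s') PMF)
      \<le> T1 + L_P * l1 K (empirical K N act) \<nu>MF + l1 K (R act) PMF" for act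
  proof -
    have "measure_pmf.expectation (Nx act) (\<lambda>s'. l1 K (empirical K N s') PMF)
       \<le> measure_pmf.expectation (Nx act) (\<lambda>s'. l1 K (empirical K N s') (Q act) + (l1 K (Q act) (R act) + l1 K (R act) PMF))"
      by (intro integral_mono) (auto simp: integrable_measure_pmf_finite[OF finNx] intro: order_trans[OF l1_tri3] simp: add.assoc)
    also have "\<dots> = measure_pmf.expectation (Nx act) (\<lambda>s'. l1 K (empirical K N s') (Q act)) + (l1 K (Q act) (R act) + l1 K (R act) PMF)"
      by (simp add: integrable_measure_pmf_finite[OF finNx])
    also have "measure_pmf.expectation (Nx act) (\<lambda>s'. l1 K (empirical K N s') (Q act)) \<le> T1"
      unfolding Nx_def Q_eq emp_Qform T1_def Ag_def
      by (rule exp_l1_bound[where g="\<lambda>a y c. if y = c then 1 else 0"]) (rule sum_ind_sq)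
    finally show ?thesis using QR[of act] by simp
  qed
  have E\<nu>: "measure_pmf.expectation Act (\<lambda>act. l1 K (empirical K N act) \<nu>MF) \<le> T2"
    unfolding Act_def \<nu>MF_eq emp_Qform T2_def Ag_def
    by (rule exp_l1_bound[where g="\<lambda>a y c. if y = c then 1 else 0"]) (rule sum_ind_sq)
  have ER: "measure_pmf.expectation Act (\<lambda>act. l1 K (R act) PMF) \<le> T1"
    unfolding Act_def PMF_eq R_def T1_def Ag_def
    by (rule exp_l1_bound[where g="\<lambda>a y c. pmf (P (fst a) (s a) y \<mu> \<nu>MF) c"]) (rule sum_pmf_sq)
  have "measure_pmf.expectation (step K N P pol t s) (\<lambda>s'. l1 K (empirical K N s') PMF)
      = measure_pmf.expectation Act (\<lambda>act. measure_pmf.expectation (Nx act) (\<lambda>s'. l1 K (empirical K N s') PMF))"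
    unfolding stepeq by (rule exp_bind_fin[OF finAct finNx])
  also have "\<dots> \<le> measure_pmf.expectation Act (\<lambda>act. T1 + L_P * l1 K (empirical K N act) \<nu>MF + l1 K (R act) PMF)"
    by (intro integral_mono inner) (auto simp: integrable_measure_pmf_finite[OF finAct])
  also have "\<dots> = T1 + L_P * measure_pmf.expectation Act (\<lambda>act. l1 K (empirical K N act) \<nu>MF)
      + measure_pmf.expectation Act (\<lambda>act. l1 K (R act) PMF)"
    by (simp add: integrable_measure_pmf_finite[OF finAct])
  also have "\<dots> \<le> T1 + L_P * T2 + T1"
    using E\<nu> ER LP by (intro add_mono mult_left_mono) auto
  finally show ?thesis unfolding PMF_def \<mu>_def T1_def T2_def by simp
qed



lemma final_arith:
  fixes X U :: nat and n L :: real and N :: "nat \<Rightarrow> nat"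
  assumes "X \<ge> 1" "U \<ge> 1" "n > 0" "L > 0"
  shows "2 * ((\<Sum>k<K. sqrt (real (X * N k))) / n) + L * ((\<Sum>k<K. sqrt (real (U * N k))) / n)
     \<le> (2 + L) * sqrt (real (X * U)) * (1 / n) * (\<Sum>k<K. sqrt (real (N k)))"
proof -
  define S where "S = (\<Sum>k<K. sqrt (real (N k))) / n"
  have S0: "S \<ge> 0" unfolding S_def using assms by (auto intro!: divide_nonneg_pos sum_nonneg)
  have e1: "(\<Sum>k<K. sqrt (real (X * N k))) / n = sqrt (real X) * S"
    unfolding S_def by (simp add: real_sqrt_mult sum_distrib_left)
  have e2: "(\<Sum>k<K. sqrt (real (U * N k))) / n = sqrt (real U) * S"
    unfolding S_def by (simp add: real_sqrt_mult sum_distrib_left)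
  have sX: "sqrt (real X) \<le> sqrt (real (X * U))" using assms by (intro real_sqrt_le_mono) simp
  have sU: "sqrt (real U) \<le> sqrt (real (X * U))" using assms by (intro real_sqrt_le_mono) simp
  have "2 * (sqrt (real X) * S) + L * (sqrt (real U) * S) \<le> 2 * (sqrt (real (X * U)) * S) + L * (sqrt (real (X * U)) * S)"
    using assms S0 sX sU by (intro add_mono mult_left_mono mult_right_mono) auto
  also have "\<dots> = (2 + L) * sqrt (real (X * U)) * (1 / n) * (\<Sum>k<K. sqrt (real (N k)))"
    unfolding S_def by (simp add: algebra_simps)
  finally show ?thesis unfolding e1 e2 .
qed

theorem lemma8:
  fixes K :: nat and N :: "nat \<Rightarrow> nat" and L_P :: real
    and P :: "nat \<Rightarrow> 'x::finite \<Rightarrow> 'u::finite \<Rightarrow> ('x \<times> nat \<Rightarrow> real) \<Rightarrow> ('u \<times> nat \<Rightarrow> real) \<Rightarrow> 'x pmf"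
    and pol :: "nat \<Rightarrow> nat \<Rightarrow> 'x \<Rightarrow> ('x \<times> nat \<Rightarrow> real) \<Rightarrow> 'u pmf"
    and init :: "(nat \<times> nat \<Rightarrow> 'x) pmf"
    and t :: nat
  assumes "K \<ge> 1"
    and "\<And>k. k < K \<Longrightarrow> N k \<ge> 1"
    and "L_P > 0"
    and "\<And>k x u mu1 mu2 nu1 nu2. k < K \<Longrightarrow> is_dist K mu1 \<Longrightarrow> is_dist K mu2 \<Longrightarrow>
           is_dist K nu1 \<Longrightarrow> is_dist K nu2 \<Longrightarrow>
           l1_pmf (P k x u mu1 nu1) (P k x u mu2 nu2) \<le> L_P * (l1 K mu1 mu2 + l1 K nu1 nu2)"
  shows "measure_pmf.expectation (pair_law K N P pol init t)
           (\<lambda>(s, s'). l1 K (empirical K N s') (P_MF K P (empirical K N s) (pol t)))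
         \<le> (2 + L_P) * sqrt (real (CARD('x) * CARD('u))) * (1 / real (Npop K N))
             * (\<Sum>k<K. sqrt (real (N k)))"
proof -
  have "N 0 \<le> (\<Sum>k<K. N k)" using assms(1) by (intro member_le_sum) auto
  then have npos: "Npop K N > 0" using assms(1) assms(2)[of 0] by (simp add: Npop_def)
  let ?C = "(2 + L_P) * sqrt (real (CARD('x) * CARD('u))) * (1 / real (Npop K N)) * (\<Sum>k<K. sqrt (real (N k)))"
  have C0: "0 \<le> ?C" using assms(3) npos by (intro mult_nonneg_nonneg sum_nonneg) auto
  have finstep: "finite (set_pmf (step K N P pol t s))" for s
    unfolding step_def by (auto intro!: fin_Pi agents_finite)
  show ?thesis
    unfolding pair_law_def
  proof (rule exp_bind_le_nn[OF _ C0])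
    fix y show "0 \<le> (case y of (s, s') \<Rightarrow> l1 K (empirical K N s') (P_MF K P (empirical K N s) (pol t)))"
      by (cases y) (simp add: l1_nonneg)
  next
    fix s
    show "integrable (measure_pmf (map_pmf (Pair s) (step K N P pol t s)))
            (\<lambda>(s, s'). l1 K (empirical K N s') (P_MF K P (empirical K N s) (pol t)))"
      by (rule integrable_measure_pmf_finite) (simp add: finstep)
  next
    fix s
    have "measure_pmf.expectation (map_pmf (Pair s) (step K N P pol t s))
            (\<lambda>(s, s'). l1 K (empirical K N s') (P_MF K P (empirical K N s) (pol t)))
        = measure_pmf.expectation (step K N P pol t s) (\<lambda>s'. l1 K (empirical K N s') (P_MF K P (empirical K N s) (pol t)))"
      by simp
    also have "\<dots> \<le> 2 * ((\<Sum>k<K. sqrt (real (CARD('x) * N k))) / real (Npop K N))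
            + L_P * ((\<Sum>k<K. sqrt (real (CARD('u) * N k))) / real (Npop K N))"
      by (rule step_bound[OF npos assms(3) assms(4)])
    also have "\<dots> \<le> ?C"
      using npos assms(3) by (intro final_arith) (auto simp: Suc_le_eq)
    finally show "measure_pmf.expectation (map_pmf (Pair s) (step K N P pol t s))
            (\<lambda>(s, s'). l1 K (empirical K N s') (P_MF K P (empirical K N s) (pol t))) \<le> ?C" .
  qed
qed


end
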